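(* For every weak composition $a$, $\mathfrak{F}_a=\sum_{S\in\mathfrak{F}\mathrm{SSF}(a)}x^{\mathrm{wt}(S)}$.
   Context: Weak composition of length $n$: sequence of $n$ nonnegative integers; $\mathrm{flat}(a)$ deletes zero parts; $b\ge a$ means $b_1+\cdots+b_i\ge a_1+\cdots+a_i$ for all $i$. $\mathfrak{F}_a=\sum x^b$ over weak compositions $b$ of length $n$ with $b\ge a$ and $\mathrm{flat}(b)$ refining $\mathrm{flat}(a)$ (i.e. $\mathrm{flat}(a)$ is obtained by summing consecutive parts of $\mathrm{flat}(b)$). $D(a)$: $a_i$ left-justified boxes in row $i$, row 1 lowest. For a filling $S$, $\mathrm{wt}(S)_i$ is the number of entries $i$. Triples (rows $r<s$): Type A: $\gamma=(r,c),\alpha=(r,c+1),\beta=(s,c+1)$ with $a_r\ge a_s$; Type B: $\gamma=(s,c),\alpha=(s,c+1),\beta=(r,c)$ with $a_s>a_r$; inversion triple: $\beta>\gamma\ge\alpha$ or $\gamma\ge\alpha>\beta$. A semi-skyline filling of $D(a)$: positive integer entries, rows weakly decreasing left to right, distinct entries in each column, all triples inversion triples. $\mathfrak{F}\mathrm{SSF}(a)$: semi-skyline fillings of $D(a)$ in which each first-column entry is at most its row index and, whenever box $B$ is in a higher row than box $B'$, the entry of $B$ is strictly larger than that of $B'$. *)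

theory Defs
  imports Main
begin

text \<open>A weak composition of length n is a list a of naturals with length a = n;
  its i-th part (1-based) is a ! (i - 1).\<close>

definition flat :: "nat list \<Rightarrow> nat list" where
  "flat a = filter (\<lambda>x. x \<noteq> 0) a"

definition refines :: "nat list \<Rightarrow> nat list \<Rightarrow> bool" where
  "refines p q \<longleftrightarrow> (\<exists>blocks. (\<forall>bl\<in>set blocks. bl \<noteq> []) \<and> concat blocks = p
                                 \<and> map sum_list blocks = q)"

definition dom_ge :: "nat list \<Rightarrow> nat list \<Rightarrow> bool" where
  "dom_ge b a \<longleftrightarrow> (\<forall>i \<le> length a. sum_list (take i a) \<le> sum_list (take i b))"

text \<open>Exponent vectors of the monomials of the fundamental slide polynomial F_a.\<close>
definition slide_exps :: "nat list \<Rightarrow> nat list set" where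
  "slide_exps a = {b. length b = length a \<and> dom_ge b a \<and> refines (flat b) (flat a)}"

text \<open>Boxes of D(a): (r, c) with row r (1 = lowest) and column c, both 1-based.\<close>
definition cells :: "nat list \<Rightarrow> (nat \<times> nat) set" where
  "cells a = {(r, c). 1 \<le> r \<and> r \<le> length a \<and> 1 \<le> c \<and> c \<le> a ! (r - 1)}"

definition filling :: "nat list \<Rightarrow> (nat \<times> nat \<Rightarrow> nat) \<Rightarrow> bool" where
  "filling a S \<longleftrightarrow> (\<forall>x \<in> cells a. S x > 0) \<and> (\<forall>x. x \<notin> cells a \<longrightarrow> S x = 0)"

definition wt :: "nat list \<Rightarrow> (nat \<times> nat \<Rightarrow> nat) \<Rightarrow> nat list" where
  "wt a S = map (\<lambda>i. card {x \<in> cells a. S x = i}) [1..<length a + 1]"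

definition inversion_triple :: "nat \<Rightarrow> nat \<Rightarrow> nat \<Rightarrow> bool" where
  "inversion_triple \<gamma> \<alpha> \<beta> \<longleftrightarrow> (\<beta> > \<gamma> \<and> \<gamma> \<ge> \<alpha>) \<or> (\<gamma> \<ge> \<alpha> \<and> \<alpha> > \<beta>)"

definition triples_ok :: "nat list \<Rightarrow> (nat \<times> nat \<Rightarrow> nat) \<Rightarrow> bool" where
  "triples_ok a S \<longleftrightarrow>
     (\<forall>r s c. 1 \<le> r \<and> r < s \<and> s \<le> length a \<and> 1 \<le> c \<longrightarrow>
        ((a ! (r - 1) \<ge> a ! (s - 1) \<and> (r, c) \<in> cells a \<and> (r, c + 1) \<in> cells a \<and> (s, c + 1) \<in> cells a
            \<longrightarrow> inversion_triple (S (r, c)) (S (r, c + 1)) (S (s, c + 1))) \<and>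
         (a ! (s - 1) > a ! (r - 1) \<and> (s, c) \<in> cells a \<and> (s, c + 1) \<in> cells a \<and> (r, c) \<in> cells a
            \<longrightarrow> inversion_triple (S (s, c)) (S (s, c + 1)) (S (r, c)))))"

definition semi_skyline :: "nat list \<Rightarrow> (nat \<times> nat \<Rightarrow> nat) \<Rightarrow> bool" where
  "semi_skyline a S \<longleftrightarrow> filling a S
     \<and> (\<forall>r c. (r, c) \<in> cells a \<and> (r, c + 1) \<in> cells a \<longrightarrow> S (r, c + 1) \<le> S (r, c))
     \<and> (\<forall>r s c. (r, c) \<in> cells a \<and> (s, c) \<in> cells a \<and> r \<noteq> s \<longrightarrow> S (r, c) \<noteq> S (s, c))
     \<and> triples_ok a S"

definition FSSF :: "nat list \<Rightarrow> (nat \<times> nat \<Rightarrow> nat) set" where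
  "FSSF a = {S. semi_skyline a S
     \<and> (\<forall>r. (r, 1) \<in> cells a \<longrightarrow> S (r, 1) \<le> r)
     \<and> (\<forall>B \<in> cells a. \<forall>B' \<in> cells a. fst B > fst B' \<longrightarrow> S B > S B')}"

text \<open>Polynomials in x_1..x_n with nat coefficients, represented by their coefficient
  function on exponent vectors: the generating function of a set A with weight w.\<close>
definition genfun :: "'s set \<Rightarrow> ('s \<Rightarrow> nat list) \<Rightarrow> (nat list \<Rightarrow> nat)" where
  "genfun A w = (\<lambda>m. card {s \<in> A. w s = m})"

end

theory Submission
  imports Defs
begin

lemma psum_mono: "r \<le> s \<Longrightarrow> sum_list (take r xs) \<le> sum_list (take s (xs::nat list))"
proof -
  assume "r \<le> s"
  then have "take s xs = take r xs @ drop r (take s xs)"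
    using append_take_drop_id[of r "take s xs"] by (simp add: min_absorb1)
  then have "sum_list (take s xs) = sum_list (take r xs) + sum_list (drop r (take s xs))"
    by (metis sum_list_append)
  then show ?thesis by simp
qed

lemma psum_Suc: "r < length xs \<Longrightarrow> sum_list (take (Suc r) xs) = sum_list (take r xs) + xs ! r"
  by (simp add: take_Suc_conv_app_nth)

lemma psum_strict:
  assumes "0 \<notin> set (p::nat list)" "k < i" "i \<le> length p"
  shows "sum_list (take k p) < sum_list (take i p)"
proof -
  have "p ! k \<in> set p" using assms by (intro nth_mem) simp
  then have "p ! k \<noteq> 0" using assms(1) by metis
  then have "p ! k > 0" by simp
  then have "sum_list (take k p) < sum_list (take (Suc k) p)"
    using assms by (simp add: psum_Suc)
  also have "\<dots> \<le> sum_list (take i p)" using assms by (intro psum_mono) simp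
  finally show ?thesis .
qed

definition ps :: "nat list \<Rightarrow> nat set" where
  "ps xs = range (\<lambda>i. sum_list (take i xs))"

lemma zero_ps: "0 \<in> ps xs"
  unfolding ps_def by (rule range_eqI[of _ _ 0]) simp

lemma sum_ps: "sum_list xs \<in> ps xs"
  unfolding ps_def by (rule range_eqI[of _ _ "length xs"]) simp

lemma ps_Cons: "ps (y#xs) = insert 0 ((+) y ` ps xs)"
proof
  show "ps (y#xs) \<subseteq> insert 0 ((+) y ` ps xs)"
  proof
    fix z assume "z \<in> ps (y#xs)"
    then obtain i where z: "z = sum_list (take i (y#xs))" unfolding ps_def by auto
    show "z \<in> insert 0 ((+) y ` ps xs)"
    proof (cases i)
      case 0 then show ?thesis using z by simp
    next
      case (Suc j) then show ?thesis using z unfolding ps_def by auto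
    qed
  qed
next
  show "insert 0 ((+) y ` ps xs) \<subseteq> ps (y#xs)"
  proof
    fix z assume "z \<in> insert 0 ((+) y ` ps xs)"
    then show "z \<in> ps (y#xs)"
    proof
      assume "z = 0" then show ?thesis using zero_ps by simp
    next
      assume "z \<in> (+) y ` ps xs"
      then obtain j where "z = y + sum_list (take j xs)" unfolding ps_def by auto
      then have "z = sum_list (take (Suc j) (y#xs))" by simp
      then show ?thesis unfolding ps_def by blast
    qed
  qed
qed

lemma ps_flat: "ps (flat xs) = ps xs"
proof (induction xs)
  case Nil then show ?case by (simp add: flat_def)
next
  case (Cons y xs)
  show ?case
  proof (cases "y = 0")
    case True
    then have "ps (flat (y#xs)) = ps xs" using Cons by (simp add: flat_def)
    also have "\<dots> = ps (y#xs)" using True zero_ps by (simp add: ps_Cons insert_absorb)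
    finally show ?thesis .
  next
    case False
    then show ?thesis using Cons by (simp add: flat_def ps_Cons)
  qed
qed

lemma sum_flat: "sum_list (flat xs) = sum_list xs"
  by (induction xs) (auto simp: flat_def)

lemma zero_notin_flat: "0 \<notin> set (flat xs)"
  by (simp add: flat_def)

lemma ps_append: "(+) (sum_list u) ` ps w \<subseteq> ps (u @ w)"
proof
  fix z assume "z \<in> (+) (sum_list u) ` ps w"
  then obtain i where "z = sum_list u + sum_list (take i w)" unfolding ps_def by auto
  then have "z = sum_list (take (length u + i) (u @ w))" by simp
  then show "z \<in> ps (u @ w)" unfolding ps_def by blast
qed

lemma sum_list_concat_nat: "sum_list (concat bls) = sum_list (map sum_list (bls::nat list list))"
  by (induction bls) auto

lemma ps_blocks: "ps (map sum_list bls) \<subseteq> ps (concat (bls::nat list list))"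
proof (induction bls)
  case Nil then show ?case by simp
next
  case (Cons bl bls)
  have "ps (map sum_list (bl#bls)) = insert 0 ((+) (sum_list bl) ` ps (map sum_list bls))"
    by (simp add: ps_Cons)
  also have "\<dots> \<subseteq> insert 0 ((+) (sum_list bl) ` ps (concat bls))" using Cons by auto
  also have "\<dots> \<subseteq> ps (bl @ concat bls)" using ps_append zero_ps by blast
  finally show ?case by simp
qed

lemma refines_ps: "refines p q \<Longrightarrow> ps q \<subseteq> ps p \<and> sum_list p = sum_list q"
  unfolding refines_def using ps_blocks sum_list_concat_nat by blast

lemma ps_refines:
  "0 \<notin> set p \<Longrightarrow> 0 \<notin> set q \<Longrightarrow> ps q \<subseteq> ps p \<Longrightarrow> sum_list p = sum_list q \<Longrightarrow> refines p q"
proof (induction q arbitrary: p)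
  case Nil
  then have "p = []" by (metis empty_iff list.set(1) subsetI subset_antisym sum_list.Nil sum_list_eq_0_iff set_empty)
  then show ?case unfolding refines_def by (intro exI[of _ "[]"]) simp
next
  case (Cons x q p)
  have "x \<in> ps (x#q)" using zero_ps by (simp add: ps_Cons)
  then have "x \<in> ps p" using Cons by blast
  then obtain i0 where "x = sum_list (take i0 p)" unfolding ps_def by auto
  define i where "i = min i0 (length p)"
  have xi: "x = sum_list (take i p)" using \<open>x = _\<close> by (simp add: i_def min_def)
  have ilen: "i \<le> length p" by (simp add: i_def)
  have xpos: "x > 0" using Cons.prems(2) by (metis gr0I list.set_intros(1))
  then have "i > 0" using xi by (metis gr0I sum_list.Nil take0 less_irrefl)
  define u where "u = take i p"
  define w where "w = drop i p"
  have p: "p = u @ w" by (simp add: u_def w_def)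
  have u: "u \<noteq> []" using \<open>i > 0\<close> ilen by (auto simp add: u_def)
  have su: "sum_list u = x" using xi u_def by simp
  have sw: "sum_list w = sum_list q" using Cons.prems(4) p su by simp
  have w0: "0 \<notin> set w" using Cons.prems(1) p by simp
  have q0: "0 \<notin> set q" using Cons.prems(2) by simp
  have psq: "ps q \<subseteq> ps w"
  proof
    fix y assume "y \<in> ps q"
    then have "x + y \<in> ps (x#q)" by (simp add: ps_Cons)
    then have "x + y \<in> ps p" using Cons.prems(3) by blast
    then obtain k where k: "x + y = sum_list (take k p)" unfolding ps_def by auto
    have "\<not> k < i"
    proof
      assume "k < i"
      then have "sum_list (take k p) < x" using psum_strict[OF Cons.prems(1) _ ilen] xi by simp
      then show False using k by simp
    qed
    then have "take k p = u @ take (k - i) w" using ilen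
      by (simp add: u_def w_def take_add[symmetric])
    then have "y = sum_list (take (k - i) w)" using k su by simp
    then show "y \<in> ps w" unfolding ps_def by blast
  qed
  obtain bls where bls: "\<forall>bl\<in>set bls. bl \<noteq> []" "concat bls = w" "map sum_list bls = q"
    using Cons.IH[OF w0 q0 psq sw] unfolding refines_def by blast
  show ?case unfolding refines_def
    by (intro exI[of _ "u # bls"]) (use bls u p su in simp)
qed


section \<open>Cells and positions\<close>

definition pos :: "nat list \<Rightarrow> nat \<times> nat \<Rightarrow> nat" where
  "pos a x = sum_list (take (fst x - 1) a) + (a ! (fst x - 1) - snd x) + 1"

lemma cellsD: "(r,c) \<in> cells a \<Longrightarrow> 1 \<le> r \<and> r \<le> length a \<and> 1 \<le> c \<and> c \<le> a!(r-1)"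
  by (simp add: cells_def)

lemma psum_row: "1 \<le> r \<Longrightarrow> r \<le> length a \<Longrightarrow> sum_list (take r a) = sum_list (take (r-1) a) + a!(r-1)"
  using psum_Suc[of "r-1" a] by simp

lemma pos_bounds:
  assumes "(r,c) \<in> cells a"
  shows "sum_list (take (r-1) a) < pos a (r,c)" "pos a (r,c) \<le> sum_list (take r a)"
  using cellsD[OF assms] psum_row[of r a] by (auto simp: pos_def)

lemma pos_le_iff:
  assumes "x \<in> cells a"
  shows "pos a x \<le> sum_list (take i a) \<longleftrightarrow> fst x \<le> i"
proof -
  obtain r c where x: "x = (r,c)" by force
  show ?thesis
  proof
    assume h: "pos a x \<le> sum_list (take i a)"
    show "fst x \<le> i"
    proof (rule ccontr)
      assume "\<not> fst x \<le> i"
      then have "i \<le> r - 1" using x by simp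
      then have "sum_list (take i a) \<le> sum_list (take (r-1) a)" by (rule psum_mono)
      then show False using pos_bounds(1)[of r c a] assms x h by simp
    qed
  next
    assume "fst x \<le> i"
    then have "sum_list (take r a) \<le> sum_list (take i a)" using x psum_mono by simp
    then show "pos a x \<le> sum_list (take i a)" using pos_bounds(2)[of r c a] assms x by simp
  qed
qed

lemma finite_cells: "finite (cells a)"
proof -
  have "cells a \<subseteq> {1..length a} \<times> {1..sum_list a}"
  proof
    fix x assume x: "x \<in> cells a"
    obtain r c where "x = (r,c)" by force
    moreover have "a!(r-1) \<le> sum_list a" using cellsD[of r c a] x \<open>x = _\<close>
      by (intro elem_le_sum_list) auto
    ultimately show "x \<in> {1..length a} \<times> {1..sum_list a}" using cellsD[of r c a] x by auto
  qed
  then show ?thesis by (rule finite_subset) simp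
qed

lemma pos_inj: "inj_on (pos a) (cells a)"
proof
  fix x y assume x: "x \<in> cells a" and y: "y \<in> cells a" and e: "pos a x = pos a y"
  obtain r c where xr: "x = (r,c)" by force
  obtain s d where ys: "y = (s,d)" by force
  have rs: "r = s"
  proof (rule ccontr)
    assume "r \<noteq> s"
    then have "r < s \<or> s < r" by arith
    then show False
    proof
      assume "r < s"
      then have "sum_list (take r a) \<le> sum_list (take (s-1) a)" by (intro psum_mono) simp
      then show False using pos_bounds[of r c a] pos_bounds[of s d a] x y xr ys e by simp
    next
      assume "s < r"
      then have "sum_list (take s a) \<le> sum_list (take (r-1) a)" by (intro psum_mono) simp
      then show False using pos_bounds[of r c a] pos_bounds[of s d a] x y xr ys e by simp
    qed
  qed
  then have "c = d" using e cellsD[of r c a] cellsD[of s d a] x y xr ys by (simp add: pos_def; linarith)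
  then show "x = y" using rs xr ys by simp
qed

lemma pos_image: "pos a ` cells a = {1..sum_list a}"
proof
  show "pos a ` cells a \<subseteq> {1..sum_list a}"
  proof
    fix k assume "k \<in> pos a ` cells a"
    then obtain r c where rc: "(r,c) \<in> cells a" "k = pos a (r,c)" by force
    have "sum_list (take r a) \<le> sum_list (take (length a) a)" using cellsD[OF rc(1)] by (intro psum_mono) simp
    then show "k \<in> {1..sum_list a}" using pos_bounds[OF rc(1)] rc(2) by simp
  qed
next
  show "{1..sum_list a} \<subseteq> pos a ` cells a"
  proof
    fix k assume k: "k \<in> {1..sum_list a}"
    define r where "r = (LEAST r. k \<le> sum_list (take r a))"
    have ex: "k \<le> sum_list (take (length a) a)" using k by simp
    have r1: "k \<le> sum_list (take r a)" unfolding r_def by (rule LeastI[of "\<lambda>r. k \<le> sum_list (take r a)", OF ex])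
    have rn: "r \<le> length a" unfolding r_def by (rule Least_le[of "\<lambda>r. k \<le> sum_list (take r a)", OF ex])
    have r0: "r \<ge> 1" using r1 k by (cases r) auto
    have r2: "\<not> k \<le> sum_list (take (r-1) a)"
    proof
      assume "k \<le> sum_list (take (r-1) a)"
      then have "r \<le> r - 1" unfolding r_def by (rule Least_le[of "\<lambda>r. k \<le> sum_list (take r a)"])
      then show False using r0 by simp
    qed
    have rr: "sum_list (take r a) = sum_list (take (r-1) a) + a!(r-1)" using psum_row r0 rn by blast
    define c where "c = sum_list (take r a) - k + 1"
    have cell: "(r,c) \<in> cells a" using r0 rn r1 r2 rr by (auto simp: cells_def c_def)
    have "pos a (r,c) = k" using r1 r2 rr by (auto simp: pos_def c_def)
    then show "k \<in> pos a ` cells a" using cell by force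
  qed
qed

lemma card_cells: "card (cells a) = sum_list a"
  using card_image[OF pos_inj[of a]] pos_image[of a] by simp

lemma pos_le_N: "x \<in> cells a \<Longrightarrow> 1 \<le> pos a x \<and> pos a x \<le> sum_list a"
  using pos_image[of a] by auto

lemma card_pos_le: "card {x \<in> cells a. pos a x \<le> k} = min k (sum_list a)"
proof -
  have inj: "inj_on (pos a) {x \<in> cells a. pos a x \<le> k}" using pos_inj by (rule inj_on_subset) auto
  have "pos a ` {x \<in> cells a. pos a x \<le> k} = {1..min k (sum_list a)}"
  proof
    show "pos a ` {x \<in> cells a. pos a x \<le> k} \<subseteq> {1..min k (sum_list a)}"
      using pos_image[of a] by auto
  next
    show "{1..min k (sum_list a)} \<subseteq> pos a ` {x \<in> cells a. pos a x \<le> k}"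
    proof
      fix j assume j: "j \<in> {1..min k (sum_list a)}"
      then have "j \<in> pos a ` cells a" using pos_image[of a] by simp
      then obtain x where "x \<in> cells a" "j = pos a x" by blast
      then show "j \<in> pos a ` {x \<in> cells a. pos a x \<le> k}" using j by auto
    qed
  qed
  then show ?thesis using card_image[OF inj] by simp
qed

lemma cell_at: "1 \<le> k \<Longrightarrow> k \<le> sum_list a \<Longrightarrow> \<exists>x\<in>cells a. pos a x = k"
proof -
  assume "1 \<le> k" "k \<le> sum_list a"
  then have "k \<in> pos a ` cells a" using pos_image[of a] by simp
  then show ?thesis by blast
qed

lemma length_wt: "length (wt a S) = length a"
  by (simp add: wt_def del: upt_Suc)

lemma wt_nth: "v < length a \<Longrightarrow> wt a S ! v = card {x \<in> cells a. S x = Suc v}"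
  by (simp add: wt_def nth_upt del: upt_Suc)

lemma wt_psum:
  assumes "filling a S"
  shows "v \<le> length a \<Longrightarrow> sum_list (take v (wt a S)) = card {x \<in> cells a. S x \<le> v}"
proof (induction v)
  case 0
  have "{x \<in> cells a. S x \<le> 0} = {}" using assms unfolding filling_def by fastforce
  then show ?case by (simp only: take0 sum_list.Nil card.empty)
next
  case (Suc v)
  have "{x \<in> cells a. S x \<le> Suc v} = {x \<in> cells a. S x \<le> v} \<union> {x \<in> cells a. S x = Suc v}" by auto
  then have "card {x \<in> cells a. S x \<le> Suc v} = card {x \<in> cells a. S x \<le> v} + card {x \<in> cells a. S x = Suc v}"
    using finite_cells[of a] by (simp add: card_Un_disjoint disjoint_iff)
  then show ?case using Suc psum_Suc[of v "wt a S"] wt_nth[of v a S] by (simp add: length_wt)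
qed

section \<open>From fillings to exponents\<close>

lemma FSSF_filling: "S \<in> FSSF a \<Longrightarrow> filling a S"
  by (simp add: FSSF_def semi_skyline_def)

lemma FSSF_rowdec: "S \<in> FSSF a \<Longrightarrow> (r, c) \<in> cells a \<Longrightarrow> (r, c + 1) \<in> cells a \<Longrightarrow> S (r, c + 1) \<le> S (r, c)"
  by (simp add: FSSF_def semi_skyline_def)

lemma FSSF_strict: "S \<in> FSSF a \<Longrightarrow> B \<in> cells a \<Longrightarrow> B' \<in> cells a \<Longrightarrow> fst B > fst B' \<Longrightarrow> S B > S B'"
  by (simp add: FSSF_def)

lemma FSSF_first: "S \<in> FSSF a \<Longrightarrow> (r, 1) \<in> cells a \<Longrightarrow> S (r, 1) \<le> r"
  by (simp add: FSSF_def)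

lemma row_mono:
  assumes "S \<in> FSSF a"
  shows "(r,c) \<in> cells a \<Longrightarrow> (r,c+d) \<in> cells a \<Longrightarrow> S (r,c+d) \<le> S (r,c)"
proof (induction d)
  case 0 then show ?case by simp
next
  case (Suc d)
  have "(r, c+d) \<in> cells a" using Suc.prems by (auto simp: cells_def)
  then have "S (r, c+d) \<le> S (r,c)" using Suc by simp
  moreover have "S (r, c+d+1) \<le> S (r, c+d)"
    using FSSF_rowdec[OF assms \<open>(r, c+d) \<in> cells a\<close>] Suc.prems by simp
  ultimately show ?case by simp
qed

lemma val_bound:
  assumes "S \<in> FSSF a" "x \<in> cells a"
  shows "1 \<le> S x \<and> S x \<le> fst x"
proof -
  obtain r c where x: "x = (r,c)" by force
  have c1: "(r,1) \<in> cells a" using assms(2) x by (auto simp: cells_def)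
  have e: "1 + (c-1) = c" using assms(2) x cellsD[of r c a] by simp
  have "S (r, 1 + (c-1)) \<le> S (r,1)" by (rule row_mono[OF assms(1) c1]) (use assms(2) x e in simp)
  then have "S (r, c) \<le> S (r,1)" unfolding e .
  then have "S x \<le> r" using FSSF_first[OF assms(1) c1] x cellsD[of r c a] assms(2) by simp
  moreover have "S x > 0" using FSSF_filling[OF assms(1)] assms(2) by (simp add: filling_def)
  ultimately show ?thesis using x by simp
qed

lemma S_mono:
  assumes "S \<in> FSSF a" "x \<in> cells a" "y \<in> cells a" "pos a x \<le> pos a y"
  shows "S x \<le> S y"
proof -
  obtain r c where xr: "x = (r,c)" by force
  obtain s d where ys: "y = (s,d)" by force
  consider "r < s" | "s < r" | "r = s" by arith
  then show ?thesis
  proof cases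
    case 1 then show ?thesis using FSSF_strict[OF assms(1) assms(3) assms(2)] xr ys by simp
  next
    case 2
    then have "sum_list (take s a) \<le> sum_list (take (r-1) a)" by (intro psum_mono) simp
    then show ?thesis using pos_bounds[of r c a] pos_bounds[of s d a] assms xr ys by simp
  next
    case 3
    then have "d \<le> c" using assms(4) cellsD[of r c a] cellsD[of s d a] assms xr ys
      by (simp add: pos_def; linarith)
    then have "S (s, d + (c - d)) \<le> S (s, d)" using row_mono[OF assms(1), of s d "c-d"] assms xr ys 3 by simp
    then show ?thesis using \<open>d \<le> c\<close> xr ys 3 by simp
  qed
qed

lemma S_le_iff:
  assumes S: "S \<in> FSSF a" and x: "x \<in> cells a" and v: "v \<le> length a"
  shows "S x \<le> v \<longleftrightarrow> pos a x \<le> sum_list (take v (wt a S))"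
proof -
  define L where "L = {y \<in> cells a. S y \<le> v}"
  define K where "K = card L"
  have K: "K = sum_list (take v (wt a S))"
    using wt_psum[OF FSSF_filling[OF S] v] by (simp add: K_def L_def)
  have fin: "finite (cells a)" by (rule finite_cells)
  have KN: "K \<le> sum_list a" unfolding K_def L_def card_cells[symmetric]
    by (rule card_mono[OF fin]) auto
  have sub: "L \<subseteq> {y \<in> cells a. pos a y \<le> K}"
  proof
    fix y assume y: "y \<in> L"
    then have yc: "y \<in> cells a" by (simp add: L_def)
    have "pos a y \<le> K"
    proof (rule ccontr)
      assume "\<not> pos a y \<le> K"
      have "{z \<in> cells a. pos a z \<le> pos a y} \<subseteq> L"
        using y by (auto simp: L_def intro: order_trans[OF S_mono[OF S _ yc]])
      then have "card {z \<in> cells a. pos a z \<le> pos a y} \<le> K" unfolding K_def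
        by (intro card_mono) (auto simp: L_def fin)
      then show False using card_pos_le[of a "pos a y"] pos_le_N[OF yc] \<open>\<not> pos a y \<le> K\<close> by simp
    qed
    then show "y \<in> {y \<in> cells a. pos a y \<le> K}" using yc by simp
  qed
  have "card {y \<in> cells a. pos a y \<le> K} = K" using card_pos_le[of a K] KN by simp
  then have "L = {y \<in> cells a. pos a y \<le> K}"
    using sub by (intro card_subset_eq) (auto simp: fin K_def)
  then have "x \<in> L \<longleftrightarrow> x \<in> {y \<in> cells a. pos a y \<le> K}" by simp
  then show ?thesis using x K by (simp add: L_def)
qed

lemma FSSF_unique:
  assumes S: "S \<in> FSSF a" and T: "T \<in> FSSF a" and w: "wt a S = wt a T"
  shows "S = T"
proof
  fix x
  show "S x = T x"
  proof (cases "x \<in> cells a")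
    case True
    have bS: "S x \<le> length a" "T x \<le> length a"
      using val_bound[OF S True] val_bound[OF T True] cellsD[of "fst x" "snd x" a] True by auto
    have "S x \<le> T x" using S_le_iff[OF S True bS(2)] S_le_iff[OF T True bS(2)] w by simp
    moreover have "T x \<le> S x" using S_le_iff[OF S True bS(1)] S_le_iff[OF T True bS(1)] w by simp
    ultimately show ?thesis by simp
  next
    case False
    then show ?thesis using FSSF_filling[OF S] FSSF_filling[OF T] by (cases x) (simp add: filling_def)
  qed
qed

lemma FSSF_slide:
  assumes S: "S \<in> FSSF a"
  shows "wt a S \<in> slide_exps a"
proof -
  define b where "b = wt a S"
  define n where "n = length a"
  define N where "N = sum_list a"
  have lb: "length b = n" by (simp add: b_def n_def length_wt)
  have fin: "finite (cells a)" by (rule finite_cells)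
  have Bc: "\<And>v. v \<le> n \<Longrightarrow> sum_list (take v b) = card {x \<in> cells a. S x \<le> v}"
    unfolding b_def n_def by (rule wt_psum[OF FSSF_filling[OF S]])
  have sumb: "sum_list b = N"
  proof -
    have "{x \<in> cells a. S x \<le> n} = cells a"
      using val_bound[OF S] cellsD unfolding n_def by (fastforce)
    then show ?thesis using Bc[of n] lb card_cells[of a] by (simp add: N_def)
  qed
  have dom: "\<And>i. i \<le> n \<Longrightarrow> sum_list (take i a) \<le> sum_list (take i b)"
  proof -
    fix i assume i: "i \<le> n"
    have "{x \<in> cells a. pos a x \<le> sum_list (take i a)} \<subseteq> {x \<in> cells a. S x \<le> i}"
      using pos_le_iff val_bound[OF S] by (force)
    then have "card {x \<in> cells a. pos a x \<le> sum_list (take i a)} \<le> card {x \<in> cells a. S x \<le> i}"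
      by (intro card_mono) (auto simp: fin)
    moreover have "sum_list (take i a) \<le> N"
      using psum_mono[of i n a] i by (simp add: N_def n_def)
    ultimately show "sum_list (take i a) \<le> sum_list (take i b)"
      using card_pos_le[of a "sum_list (take i a)"] Bc[OF i] by (simp add: N_def)
  qed
  have psab: "ps a \<subseteq> ps b"
  proof
    fix z assume "z \<in> ps a"
    then obtain i0 where "z = sum_list (take i0 a)" unfolding ps_def by auto
    define i where "i = min i0 n"
    have zi: "z = sum_list (take i a)" using \<open>z = _\<close> by (simp add: i_def n_def min_def)
    have "i \<le> n" by (simp add: i_def)
    have zN: "z \<le> N" using psum_mono[of i n a] \<open>i \<le> n\<close> zi by (simp add: N_def n_def)
    consider "z = 0" | "z = N" | "0 < z \<and> z < N" using zN by arith
    then show "z \<in> ps b"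
    proof cases
      case 1 then show ?thesis by (simp add: zero_ps)
    next
      case 2 then show ?thesis using sum_ps[of b] sumb by simp
    next
      case 3
      obtain x where x: "x \<in> cells a" "pos a x = z" using cell_at[of z a] 3 by (auto simp: N_def)
      obtain y where y: "y \<in> cells a" "pos a y = z + 1" using cell_at[of "z+1" a] 3 by (auto simp: N_def)
      have fx: "fst x \<le> i" using pos_le_iff[OF x(1), of i] x zi by simp
      have fy: "\<not> fst y \<le> i" using pos_le_iff[OF y(1), of i] y zi by simp
      have Sxy: "S x < S y" using FSSF_strict[OF S y(1) x(1)] fx fy by simp
      define v where "v = S x"
      have vn: "v \<le> n" using val_bound[OF S x(1)] cellsD[of "fst x" "snd x" a] x(1) by (simp add: v_def n_def)
      have "z \<le> sum_list (take v b)" using S_le_iff[OF S x(1), of v] vn x by (simp add: v_def b_def n_def)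
      moreover have "\<not> z + 1 \<le> sum_list (take v b)"
        using S_le_iff[OF S y(1), of v] vn y Sxy by (simp add: v_def b_def n_def)
      ultimately have "z = sum_list (take v b)" by simp
      then show ?thesis unfolding ps_def by blast
    qed
  qed
  have "refines (flat b) (flat a)"
    by (rule ps_refines) (use zero_notin_flat ps_flat sum_flat psab sumb in \<open>auto simp: N_def\<close>)
  then show ?thesis using lb dom unfolding slide_exps_def dom_ge_def b_def n_def by simp
qed

section \<open>From exponents to fillings\<close>

definition S0 :: "nat list \<Rightarrow> nat list \<Rightarrow> nat \<times> nat \<Rightarrow> nat" where
  "S0 a b x = (if x \<in> cells a then (LEAST v. pos a x \<le> sum_list (take v b)) else 0)"

lemma S0_le_iff:
  assumes x: "x \<in> cells a" and sb: "sum_list b = sum_list a"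
  shows "S0 a b x \<le> v \<longleftrightarrow> pos a x \<le> sum_list (take v b)"
proof -
  let ?P = "\<lambda>v. pos a x \<le> sum_list (take v b)"
  have ex: "?P (length b)" using pos_le_N[OF x] sb by simp
  have L: "?P (LEAST v. ?P v)" by (rule LeastI[of ?P, OF ex])
  show ?thesis
  proof
    assume "S0 a b x \<le> v"
    then have "(LEAST v. ?P v) \<le> v" using x by (simp add: S0_def)
    then show "?P v" using L psum_mono[of "LEAST v. ?P v" v b] by linarith
  next
    assume "?P v"
    then show "S0 a b x \<le> v" using x Least_le[of ?P v] by (simp add: S0_def)
  qed
qed

lemma slide_FSSF:
  assumes b: "b \<in> slide_exps a"
  shows "S0 a b \<in> FSSF a \<and> wt a (S0 a b) = b"
proof -
  define n where "n = length a"
  define N where "N = sum_list a"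
  define S where "S = S0 a b"
  have lb: "length b = n" using b by (simp add: slide_exps_def n_def)
  have dom: "\<And>i. i \<le> n \<Longrightarrow> sum_list (take i a) \<le> sum_list (take i b)"
    using b by (simp add: slide_exps_def dom_ge_def n_def)
  have rf: "refines (flat b) (flat a)" using b by (simp add: slide_exps_def)
  have sb: "sum_list b = sum_list a" and psab: "ps a \<subseteq> ps b"
    using refines_ps[OF rf] by (simp_all add: ps_flat sum_flat)
  have fin: "finite (cells a)" by (rule finite_cells)
  have le: "\<And>x v. x \<in> cells a \<Longrightarrow> S x \<le> v \<longleftrightarrow> pos a x \<le> sum_list (take v b)"
    unfolding S_def using S0_le_iff sb by blast
  have mono: "\<And>x y. x \<in> cells a \<Longrightarrow> y \<in> cells a \<Longrightarrow> pos a x \<le> pos a y \<Longrightarrow> S x \<le> S y"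
    using le by (meson order_refl order_trans)
  have posS: "\<And>x. x \<in> cells a \<Longrightarrow> S x > 0"
  proof -
    fix x assume x: "x \<in> cells a"
    have "\<not> S x \<le> 0" using le[OF x, of 0] pos_le_N[OF x] by simp
    then show "S x > 0" by simp
  qed
  have fill: "filling a S" using posS by (simp add: filling_def S_def S0_def)
  have rowdec: "\<And>r c. (r, c) \<in> cells a \<Longrightarrow> (r, c + 1) \<in> cells a \<Longrightarrow> S (r, c + 1) \<le> S (r, c)"
  proof -
    fix r c assume h: "(r, c) \<in> cells a" "(r, c + 1) \<in> cells a"
    have "pos a (r, c+1) \<le> pos a (r,c)" using cellsD[OF h(2)] by (simp add: pos_def)
    then show "S (r, c + 1) \<le> S (r, c)" using mono h by blast
  qed
  have strict: "\<And>B B'. B \<in> cells a \<Longrightarrow> B' \<in> cells a \<Longrightarrow> fst B > fst B' \<Longrightarrow> S B > S B'"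
  proof -
    fix B B' assume B: "B \<in> cells a" and B': "B' \<in> cells a" and f: "fst B > fst B'"
    define r where "r = fst B'"
    have "sum_list (take r a) \<in> ps b" using psab unfolding ps_def by blast
    then obtain w where w: "sum_list (take r a) = sum_list (take w b)" unfolding ps_def by auto
    have "pos a B' \<le> sum_list (take r a)" using pos_le_iff[OF B', of r] by (simp add: r_def)
    then have "S B' \<le> w" using le[OF B', of w] w by simp
    then have "sum_list (take (S B') b) \<le> sum_list (take r a)" using w psum_mono by metis
    also have "\<dots> \<le> sum_list (take (fst B - 1) a)" using f by (intro psum_mono) (simp add: r_def)
    also have "\<dots> < pos a B"
      using pos_bounds(1)[of "fst B" "snd B" a] B by simp
    finally have "\<not> S B \<le> S B'" using le[OF B, of "S B'"] by simp
    then show "S B > S B'" by simp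
  qed
  have coldist: "\<And>r s c. (r, c) \<in> cells a \<and> (s, c) \<in> cells a \<and> r \<noteq> s \<longrightarrow> S (r, c) \<noteq> S (s, c)"
  proof (intro impI)
    fix r s c assume h: "(r, c) \<in> cells a \<and> (s, c) \<in> cells a \<and> r \<noteq> s"
    then have "r < s \<or> s < r" by arith
    then show "S (r, c) \<noteq> S (s, c)" using strict[of "(r,c)" "(s,c)"] strict[of "(s,c)" "(r,c)"] h by auto
  qed
  have triples: "triples_ok a S"
    unfolding triples_ok_def inversion_triple_def
  proof (intro allI impI)
    fix r s c :: nat
    assume rs: "1 \<le> r \<and> r < s \<and> s \<le> length a \<and> 1 \<le> c"
    have A: "S (s, c + 1) > S (r, c) \<and> S (r, c) \<ge> S (r, c + 1) \<or>
          S (r, c) \<ge> S (r, c + 1) \<and> S (r, c + 1) > S (s, c + 1)"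
      if h: "a ! (r - 1) \<ge> a ! (s - 1) \<and> (r, c) \<in> cells a \<and> (r, c + 1) \<in> cells a \<and> (s, c + 1) \<in> cells a"
    proof -
      have "S (s, c+1) > S (r, c)" using strict[of "(s,c+1)" "(r,c)"] h rs by simp
      moreover have "S (r, c) \<ge> S (r, c+1)" using rowdec h by blast
      ultimately show ?thesis by simp
    qed
    have B: "S (r, c) > S (s, c) \<and> S (s, c) \<ge> S (s, c + 1) \<or>
          S (s, c) \<ge> S (s, c + 1) \<and> S (s, c + 1) > S (r, c)"
      if h: "a ! (s - 1) > a ! (r - 1) \<and> (s, c) \<in> cells a \<and> (s, c + 1) \<in> cells a \<and> (r, c) \<in> cells a"
    proof -
      have "S (s, c+1) > S (r, c)" using strict[of "(s,c+1)" "(r,c)"] h rs by simp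
      moreover have "S (s, c) \<ge> S (s, c+1)" using rowdec h by blast
      ultimately show ?thesis by simp
    qed
    show "(a ! (r - 1) \<ge> a ! (s - 1) \<and> (r, c) \<in> cells a \<and> (r, c + 1) \<in> cells a \<and> (s, c + 1) \<in> cells a
            \<longrightarrow> (S (s, c + 1) > S (r, c) \<and> S (r, c) \<ge> S (r, c + 1) \<or>
          S (r, c) \<ge> S (r, c + 1) \<and> S (r, c + 1) > S (s, c + 1))) \<and>
         (a ! (s - 1) > a ! (r - 1) \<and> (s, c) \<in> cells a \<and> (s, c + 1) \<in> cells a \<and> (r, c) \<in> cells a
            \<longrightarrow> (S (r, c) > S (s, c) \<and> S (s, c) \<ge> S (s, c + 1) \<or>
          S (s, c) \<ge> S (s, c + 1) \<and> S (s, c + 1) > S (r, c)))"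
      using A B by blast
  qed
  have first: "\<And>r. (r, 1) \<in> cells a \<Longrightarrow> S (r, 1) \<le> r"
  proof -
    fix r assume h: "(r, 1) \<in> cells a"
    have "pos a (r,1) = sum_list (take r a)"
      using cellsD[OF h] psum_row[of r a] by (simp add: pos_def)
    also have "\<dots> \<le> sum_list (take r b)" using dom cellsD[OF h] by (simp add: n_def)
    finally show "S (r, 1) \<le> r" using le[OF h] by simp
  qed
  have inF: "S \<in> FSSF a"
    unfolding FSSF_def semi_skyline_def using fill rowdec coldist triples first strict by blast
  have wtS: "wt a S = b"
  proof (rule nth_equalityI)
    show "length (wt a S) = length b" using lb by (simp add: length_wt n_def)
  next
    fix v assume "v < length (wt a S)"
    then have v: "v < n" by (simp add: length_wt n_def)
    have eq: "{x \<in> cells a. S x = Suc v} =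
        {x \<in> cells a. pos a x \<le> sum_list (take (Suc v) b)} - {x \<in> cells a. pos a x \<le> sum_list (take v b)}"
    proof -
      have "\<And>x. x \<in> cells a \<Longrightarrow> S x = Suc v \<longleftrightarrow> S x \<le> Suc v \<and> \<not> S x \<le> v" by auto
      then show ?thesis using le by blast
    qed
    have m1: "sum_list (take (Suc v) b) \<le> N" using psum_mono[of "Suc v" n b] v lb sb by (simp add: N_def)
    have m2: "sum_list (take v b) \<le> sum_list (take (Suc v) b)" by (rule psum_mono) simp
    have "card {x \<in> cells a. S x = Suc v} = sum_list (take (Suc v) b) - sum_list (take v b)"
      unfolding eq
      by (subst card_Diff_subset) (use m1 m2 card_pos_le[of a] fin in \<open>auto simp: N_def\<close>)
    also have "\<dots> = b ! v" using psum_Suc[of v b] v lb by simp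
    finally show "wt a S ! v = b ! v" using wt_nth[of v a S] v by (simp add: n_def)
  qed
  show ?thesis using inF wtS by (simp add: S_def)
qed

lemma finite_FSSF: "finite (FSSF a)"
proof -
  define f where "f = (\<lambda>S::nat \<times> nat \<Rightarrow> nat. (\<lambda>x. (x, S x)) ` cells a)"
  have img: "f ` FSSF a \<subseteq> Pow (cells a \<times> {..length a})"
  proof
    fix G assume "G \<in> f ` FSSF a"
    then obtain S where S: "S \<in> FSSF a" "G = f S" by blast
    have "\<And>x. x \<in> cells a \<Longrightarrow> S x \<le> length a"
      using val_bound[OF S(1)] cellsD by fastforce
    then show "G \<in> Pow (cells a \<times> {..length a})" using S by (auto simp: f_def)
  qed
  have inj: "inj_on f (FSSF a)"
  proof
    fix S T assume S: "S \<in> FSSF a" and T: "T \<in> FSSF a" and e: "f S = f T"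
    show "S = T"
    proof
      fix x
      show "S x = T x"
      proof (cases "x \<in> cells a")
        case True
        then have "(x, S x) \<in> f T" using e by (auto simp: f_def)
        then show ?thesis by (auto simp: f_def)
      next
        case False
        then show ?thesis using FSSF_filling[OF S] FSSF_filling[OF T] by (cases x) (simp add: filling_def)
      qed
    qed
  qed
  have "finite (Pow (cells a \<times> {..length a}))" using finite_cells[of a] by simp
  then have "finite (f ` FSSF a)" using img finite_subset by blast
  then show ?thesis using inj by (rule finite_imageD)
qed

theorem proposition2p9:
  fixes a :: "nat list"
  shows "finite (FSSF a) \<and> genfun (slide_exps a) id = genfun (FSSF a) (wt a)"
proof
  show "finite (FSSF a)" by (rule finite_FSSF)
  show "genfun (slide_exps a) id = genfun (FSSF a) (wt a)"
  proof
    fix m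
    show "genfun (slide_exps a) id m = genfun (FSSF a) (wt a) m"
    proof (cases "m \<in> slide_exps a")
      case True
      have l: "{s \<in> slide_exps a. id s = m} = {m}" using True by auto
      have r: "{S \<in> FSSF a. wt a S = m} = {S0 a m}"
        using slide_FSSF[OF True] FSSF_unique[of _ a "S0 a m"] by auto
      show ?thesis unfolding genfun_def l r by simp
    next
      case False
      have l: "{s \<in> slide_exps a. id s = m} = {}" using False by auto
      have r: "{S \<in> FSSF a. wt a S = m} = {}" using False FSSF_slide by blast
      show ?thesis unfolding genfun_def l r by simp
    qed
  qed
qed

end
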